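(* Let $m,k\in\mathbb{N}$. Then \[ {}_3F_2\left[\begin{array}{r} -2m-1,\ 1+k,\ 1+k;\\ -2m-1-k,\ -2m-1-k;\end{array}1\right]_{2m+1}=0. \]
   Context: $\mathbb{N}=\{1,2,3,\dots\}$. For $a\in\mathbb{C}$ and $n\in\mathbb{N}_0$, $(a)_0=1$ and $(a)_n=a(a+1)\cdots(a+n-1)$. For $N\in\mathbb{N}_0$, ${}_3F_2\left[\begin{array}{r} a_1,a_2,a_3;\\ b_1,b_2;\end{array}z\right]_N=\sum_{n=0}^{N}\frac{(a_1)_n(a_2)_n(a_3)_n}{(b_1)_n(b_2)_n}\frac{z^n}{n!}$ (the sum of the first $N+1$ terms), defined whenever $(b_1)_n(b_2)_n\neq0$ for $0\le n\le N$. *)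

theory Defs
  imports Complex_Main
begin

definition hyp3F2_trunc :: "complex \<Rightarrow> complex \<Rightarrow> complex \<Rightarrow> complex \<Rightarrow> complex \<Rightarrow> complex \<Rightarrow> nat \<Rightarrow> complex" where
  "hyp3F2_trunc a1 a2 a3 b1 b2 z N =
     (\<Sum>n=0..N. (pochhammer a1 n * pochhammer a2 n * pochhammer a3 n)
                / (pochhammer b1 n * pochhammer b2 n) * z ^ n / of_nat (fact n))"

end

theory Submission
  imports Defs
begin

lemma poch_neg_nat:
  assumes "n \<le> M"
  shows "pochhammer (- of_nat M :: complex) n * of_nat (fact (M - n)) = (-1)^n * of_nat (fact M)"
  using assms
proof (induction n)
  case 0 then show ?case by simp
next
  case (Suc n)
  have d: "M - n = Suc (M - Suc n)" using Suc.prems by simp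
  have f: "(of_nat (fact (M - n)) :: complex) = (of_nat M - of_nat n) * of_nat (fact (M - Suc n))"
    unfolding d fact_Suc of_nat_mult using Suc.prems by (simp add: of_nat_diff)
  have "pochhammer (- of_nat M :: complex) (Suc n) * of_nat (fact (M - Suc n))
      = (- of_nat M + of_nat n) * pochhammer (- of_nat M) n * of_nat (fact (M - Suc n))"
    by (simp only: pochhammer_rec')
  also have "\<dots> = - (pochhammer (- of_nat M) n * ((of_nat M - of_nat n) * of_nat (fact (M - Suc n))))"
    by (simp only: algebra_simps) simp
  also have "\<dots> = - (pochhammer (- of_nat M) n * of_nat (fact (M - n)))"
    by (simp only: f)
  also have "\<dots> = (-1)^Suc n * of_nat (fact M)" using Suc by simp
  finally show ?case .
qed

lemma poch_pos_nat:
  "pochhammer (of_nat k + 1 :: complex) n * of_nat (fact k) = of_nat (fact (k + n))"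
proof (induction n)
  case 0 then show ?case by simp
next
  case (Suc n)
  have "pochhammer (of_nat k + 1 :: complex) (Suc n) * of_nat (fact k)
     = (of_nat k + 1 + of_nat n) * (pochhammer (of_nat k + 1) n * of_nat (fact k))"
    by (simp add: pochhammer_rec')
  also have "\<dots> = of_nat (fact (k + Suc n))" using Suc by (simp add: algebra_simps)
  finally show ?case .
qed

lemma alg:
  fixes A B C D E F G s :: complex
  assumes "s * s = 1" "B \<noteq> 0" "C \<noteq> 0" "D \<noteq> 0" "F \<noteq> 0" "G \<noteq> 0"
  shows "(s * A / B * (E / F) * (E / F)) / ((s * C / D) * (s * C / D)) / G
       = s * (A / (G * B)) * (E * D)^2 / (F * C)^2"
proof -
  have s0: "s \<noteq> 0" using assms(1) by auto
  have "(s * A / B * (E / F) * (E / F)) / ((s * C / D) * (s * C / D)) / G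
      = (s * A * E * E * D * D) / (B * F * F * (s * s) * C * C * G)"
    using assms s0 by (simp add: divide_simps)
  also have "\<dots> = (s * A * E * E * D * D) / (B * F * F * C * C * G)" using assms(1) by simp
  also have "\<dots> = s * (A / (G * B)) * (E * D)^2 / (F * C)^2"
    by (simp add: power2_eq_square ac_simps)
  finally show ?thesis .
qed

theorem mainTheorem13:
  fixes m k :: nat
  assumes "m \<ge> 1" and "k \<ge> 1"
  shows "hyp3F2_trunc (- 2 * of_nat m - 1) (1 + of_nat k) (1 + of_nat k)
           (- 2 * of_nat m - 1 - of_nat k) (- 2 * of_nat m - 1 - of_nat k) 1 (2 * m + 1) = 0"
proof -
  define N where "N = 2 * m + 1"
  have a1: "(- 2 * of_nat m - 1 :: complex) = - of_nat N" by (simp add: N_def)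
  have b1: "(- 2 * of_nat m - 1 - of_nat k :: complex) = - of_nat (N + k)" by (simp add: N_def)
  have b1': "(- of_nat N - of_nat k :: complex) = - of_nat (N + k)" by simp
  have a2: "(1 + of_nat k :: complex) = of_nat k + 1" by simp
  define g where "g n = (-1)^n * of_nat (N choose n) * of_nat ((fact (k + n) * fact (N + k - n))^2)
        / (of_nat ((fact k * fact (N + k))^2) :: complex)" for n
  have t: "(pochhammer (- of_nat N) n * pochhammer (of_nat k + 1) n * pochhammer (of_nat k + 1) n)
         / (pochhammer (- of_nat (N + k)) n * pochhammer (- of_nat (N + k)) n) * 1 ^ n / of_nat (fact n)
         = g n" if "n \<le> N" for n
  proof -
    have p1: "pochhammer (- of_nat N :: complex) n = (-1)^n * of_nat (fact N) / of_nat (fact (N - n))"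
      using poch_neg_nat[OF that] by (simp add: field_simps)
    have p2: "pochhammer (- of_nat (N+k) :: complex) n = (-1)^n * of_nat (fact (N+k)) / of_nat (fact (N + k - n))"
      using poch_neg_nat[of n "N+k"] that by (simp add: field_simps)
    have p3: "pochhammer (of_nat k + 1 :: complex) n = of_nat (fact (k+n)) / of_nat (fact k)"
      using poch_pos_nat[of k n] by (simp add: field_simps)
    have c: "of_nat (N choose n) = (of_nat (fact N) / (of_nat (fact n) * of_nat (fact (N - n))) :: complex)"
      using binomial_fact[OF that] by simp
    have s: "((-1::complex)^n) * (-1)^n = 1" by (simp add: power_add[symmetric])
    show ?thesis unfolding p1 p2 p3 g_def c of_nat_mult of_nat_power power_one mult_1_right
      by (rule alg) (use s in auto)
  qed
  have gr: "g (N - n) = - g n" if "n \<le> N" for n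
  proof -
    have oddN: "odd N" by (simp add: N_def)
    have sg: "(-1::complex)^(N-n) = - ((-1::complex)^n)"
    proof -
      have "(-1::complex)^(N-n) * (-1)^n = (-1)^N" using that by (simp add: power_add[symmetric])
      also have "\<dots> = -1" using oddN by simp
      finally have h: "(-1::complex)^(N-n) * (-1)^n = -1" .
      have yy: "(-1::complex)^n * (-1)^n = 1" by (simp add: power_add[symmetric])
      have "(-1::complex)^(N-n) = ((-1)^(N-n) * (-1)^n) * (-1)^n" using yy by (simp add: mult.assoc)
      then show ?thesis using h by simp
    qed
    have "N + k - (N - n) = k + n" "k + (N - n) = N + k - n" using that by auto
    then show ?thesis unfolding g_def sg using binomial_symmetric[OF that] by (simp add: mult.commute)
  qed
  have S: "hyp3F2_trunc (- 2 * of_nat m - 1) (1 + of_nat k) (1 + of_nat k)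
           (- 2 * of_nat m - 1 - of_nat k) (- 2 * of_nat m - 1 - of_nat k) 1 (2 * m + 1) = sum g {0..N}"
    unfolding hyp3F2_trunc_def a1 b1' a2 N_def[symmetric]
    by (rule sum.cong[OF refl]) (rule t, simp)
  have "sum g {0..N} = sum (\<lambda>i. g (N + 0 - i)) {0..N}" by (rule sum.atLeastAtMost_rev)
  also have "\<dots> = - sum g {0..N}" by (simp add: gr sum_negf)
  finally have "sum g {0..N} = 0" by simp
  then show ?thesis using S by simp
qed

end
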